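(* For $n\ge1$, $d\ge2$, the coefficients of $p_{n,d}$ regarded as a polynomial in $z$ (coefficients in $\mathbf C[u_{\boldsymbol\nu}:\boldsymbol\nu\neq(d,0,\dots,0)]$) have no nonconstant common divisor.
   Context: $p_{n,d}$ is the irreducible homogeneous polynomial in the coefficients $u_{\boldsymbol\nu}$ of a degree-$d$ form $\sum u_{\boldsymbol\nu}x_0^{\nu_0}\cdots x_n^{\nu_n}$ whose zero set is the set of forms defining singular hypersurfaces of $\mathbf P^n$; $z=u_{(d,0,\dots,0)}$ is the coefficient of $x_0^d$. *)

theory Defs
  imports Complex_Main "HOL-Library.Poly_Mapping" "HOL-Computational_Algebra.Factorial_Ring"
begin

(* Multi-indices nu = (nu_0,...,nu_n) are finitely supported maps nat =>0 nat.
   The coefficient variables u_nu are indexed by multi-indices; a polynomial in the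
   u_nu with complex coefficients is a finitely supported map from monomials
   (multi-index =>0 exponent) to complex numbers. *)
type_synonym mindex = "nat \<Rightarrow>\<^sub>0 nat"
type_synonym cpoly = "((mindex \<Rightarrow>\<^sub>0 nat) \<Rightarrow>\<^sub>0 complex)"

definition mons :: "nat \<Rightarrow> nat \<Rightarrow> mindex set" where
  "mons n d = {\<nu>. Poly_Mapping.keys \<nu> \<subseteq> {..n} \<and> (\<Sum>i\<le>n. Poly_Mapping.lookup \<nu> i) = d}"

definition vars :: "cpoly \<Rightarrow> mindex set" where
  "vars p = (\<Union>m\<in>Poly_Mapping.keys p. Poly_Mapping.keys m)"

definition meval :: "cpoly \<Rightarrow> (mindex \<Rightarrow> complex) \<Rightarrow> complex" where
  "meval p u = (\<Sum>m\<in>Poly_Mapping.keys p. Poly_Mapping.lookup p m * (\<Prod>v\<in>Poly_Mapping.keys m. u v ^ Poly_Mapping.lookup m v))"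

definition homogeneous :: "cpoly \<Rightarrow> bool" where
  "homogeneous p \<longleftrightarrow> (\<exists>k. \<forall>m\<in>Poly_Mapping.keys p. (\<Sum>v\<in>Poly_Mapping.keys m. Poly_Mapping.lookup m v) = k)"

(* formal partial derivative d/dx_i of the form sum_nu u_nu x^nu, evaluated at x *)
definition form_partial :: "nat \<Rightarrow> nat \<Rightarrow> (mindex \<Rightarrow> complex) \<Rightarrow> nat \<Rightarrow> (nat \<Rightarrow> complex) \<Rightarrow> complex" where
  "form_partial n d u i x = (\<Sum>\<nu>\<in>mons n d. u \<nu> * of_nat (Poly_Mapping.lookup \<nu> i) * x i ^ (Poly_Mapping.lookup \<nu> i - 1)
        * (\<Prod>j\<in>{..n} - {i}. x j ^ Poly_Mapping.lookup \<nu> j))"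

(* the form with coefficients u defines a singular hypersurface of P^n:
   all partials vanish at some nonzero point of C^(n+1) *)
definition singular_form :: "nat \<Rightarrow> nat \<Rightarrow> (mindex \<Rightarrow> complex) \<Rightarrow> bool" where
  "singular_form n d u \<longleftrightarrow> (\<exists>x::nat \<Rightarrow> complex. (\<exists>i\<le>n. x i \<noteq> 0) \<and> (\<forall>i\<le>n. form_partial n d u i x = 0))"

definition coeff_in :: "mindex \<Rightarrow> cpoly \<Rightarrow> nat \<Rightarrow> cpoly" where
  "coeff_in z p k = (\<Sum>m\<in>{m\<in>Poly_Mapping.keys p. Poly_Mapping.lookup m z = k}.
       Poly_Mapping.single (Poly_Mapping.update z 0 m) (Poly_Mapping.lookup p m))"

end

theory Submission
  imports Defs "HOL-Library.FuncSet"
begin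

lemma pm_expand:
  fixes p :: "'a \<Rightarrow>\<^sub>0 'b::comm_monoid_add"
  shows "p = (\<Sum>m\<in>Poly_Mapping.keys p. Poly_Mapping.single m (Poly_Mapping.lookup p m))"
proof (rule poly_mapping_eqI)
  fix k
  show "Poly_Mapping.lookup p k = Poly_Mapping.lookup (\<Sum>m\<in>Poly_Mapping.keys p. Poly_Mapping.single m (Poly_Mapping.lookup p m)) k"
  proof (cases "k \<in> Poly_Mapping.keys p")
    case True
    then show ?thesis
      by (simp add: lookup_sum lookup_single when_def sum.delta)
  next
    case False
    then show ?thesis
      by (simp add: lookup_sum lookup_single when_def in_keys_iff)
  qed
qed

lemma lookup_mult_keys:
  fixes p r :: cpoly
  shows "Poly_Mapping.lookup (p * r) k = (\<Sum>a\<in>Poly_Mapping.keys p. \<Sum>b\<in>Poly_Mapping.keys r.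
      (if k = a + b then Poly_Mapping.lookup p a * Poly_Mapping.lookup r b else 0))"
proof -
  have "p * r = (\<Sum>a\<in>Poly_Mapping.keys p. Poly_Mapping.single a (Poly_Mapping.lookup p a)) *
     (\<Sum>b\<in>Poly_Mapping.keys r. Poly_Mapping.single b (Poly_Mapping.lookup r b))"
    using pm_expand[of p] pm_expand[of r] by simp
  also have "\<dots> = (\<Sum>a\<in>Poly_Mapping.keys p. \<Sum>b\<in>Poly_Mapping.keys r.
      Poly_Mapping.single (a + b) (Poly_Mapping.lookup p a * Poly_Mapping.lookup r b))"
    by (simp add: sum_distrib_left sum_distrib_right mult_single sum.swap[of _ "Poly_Mapping.keys r"])
  finally show ?thesis
    by (simp add: lookup_sum lookup_single when_def eq_commute)
qed

lemma lead_key: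
  fixes p r :: cpoly and v :: mindex
  assumes "p \<noteq> 0" "r \<noteq> 0"
  shows "\<exists>a\<in>Poly_Mapping.keys p. \<exists>b\<in>Poly_Mapping.keys r. a + b \<in> Poly_Mapping.keys (p * r)
     \<and> (\<forall>a'\<in>Poly_Mapping.keys p. Poly_Mapping.lookup a' v \<le> Poly_Mapping.lookup a v)"
proof -
  define w where "w = (\<lambda>m::mindex \<Rightarrow>\<^sub>0 nat. Poly_Mapping.lookup m v)"
  have wadd: "w (a + b) = w a + w b" for a b by (simp add: w_def lookup_add)
  define P where "P = Poly_Mapping.keys p"
  define R where "R = Poly_Mapping.keys r"
  have fP: "finite P" "P \<noteq> {}" using assms by (auto simp: P_def)
  have fR: "finite R" "R \<noteq> {}" using assms by (auto simp: R_def)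
  define A where "A = {a\<in>P. w a = Max (w ` P)}"
  define B where "B = {b\<in>R. w b = Max (w ` R)}"
  have "Max (w ` P) \<in> w ` P" using fP by (intro Max_in) auto
  then obtain a1 where "a1 \<in> P" "w a1 = Max (w ` P)" by (metis imageE)
  then have fA: "finite A" "A \<noteq> {}" using fP unfolding A_def by auto
  have "Max (w ` R) \<in> w ` R" using fR by (intro Max_in) auto
  then obtain b1 where "b1 \<in> R" "w b1 = Max (w ` R)" by (metis imageE)
  then have fB: "finite B" "B \<noteq> {}" using fR unfolding B_def by auto
  define a0 where "a0 = Max A"
  define b0 where "b0 = Max B"
  have a0A: "a0 \<in> A" using fA a0_def Max_in by blast
  have b0B: "b0 \<in> B" using fB b0_def Max_in by blast
  have a0P: "a0 \<in> P" and b0R: "b0 \<in> R" using a0A b0B by (auto simp: A_def B_def)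
  have wa: "w a \<le> w a0" if "a \<in> P" for a using that a0A fP by (auto simp: A_def)
  have wb: "w b \<le> w b0" if "b \<in> R" for b using that b0B fR by (auto simp: B_def)
  have uniq: "a = a0 \<and> b = b0" if "a \<in> P" "b \<in> R" "a + b = a0 + b0" for a b
  proof -
    have "w a + w b = w a0 + w b0" using that wadd by metis
    with wa[OF that(1)] wb[OF that(2)] have "w a = w a0" "w b = w b0" by auto
    then have "a \<in> A" "b \<in> B" using that a0A b0B by (auto simp: A_def B_def)
    then have le: "a \<le> a0" "b \<le> b0" using fA fB a0_def b0_def by auto
    show ?thesis
    proof (cases "a = a0")
      case True
      then show ?thesis using that(3) by simp
    next
      case False
      with le have "a < a0" by simp
      then have "a + b < a0 + b" by (rule add_strict_right_mono)
      also have "\<dots> \<le> a0 + b0" using le(2) by (rule add_left_mono)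
      finally show ?thesis using that(3) by simp
    qed
  qed
  have "Poly_Mapping.lookup (p * r) (a0 + b0) = Poly_Mapping.lookup p a0 * Poly_Mapping.lookup r b0"
  proof -
    have inner: "(\<Sum>b\<in>R. (if a0 + b0 = a + b then Poly_Mapping.lookup p a * Poly_Mapping.lookup r b else 0))
       = (if a = a0 then Poly_Mapping.lookup p a0 * Poly_Mapping.lookup r b0 else 0)" if "a \<in> P" for a
    proof (cases "a = a0")
      case True
      have "(\<Sum>b\<in>R. (if a0 + b0 = a + b then Poly_Mapping.lookup p a * Poly_Mapping.lookup r b else 0))
          = (\<Sum>b\<in>R. (if b = b0 then Poly_Mapping.lookup p a * Poly_Mapping.lookup r b else 0))"
        using True by (intro sum.cong) auto
      also have "\<dots> = Poly_Mapping.lookup p a0 * Poly_Mapping.lookup r b0"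
        using fR b0R True by (simp add: sum.delta)
      finally show ?thesis using True by simp
    next
      case False
      then show ?thesis using uniq[OF that] by (auto intro!: sum.neutral)
    qed
    have "Poly_Mapping.lookup (p * r) (a0 + b0) = (\<Sum>a\<in>P. \<Sum>b\<in>R.
      (if a0 + b0 = a + b then Poly_Mapping.lookup p a * Poly_Mapping.lookup r b else 0))"
      by (simp add: lookup_mult_keys P_def R_def)
    also have "\<dots> = (\<Sum>a\<in>P. (if a = a0 then Poly_Mapping.lookup p a0 * Poly_Mapping.lookup r b0 else 0))"
      using inner by (intro sum.cong) auto
    also have "\<dots> = Poly_Mapping.lookup p a0 * Poly_Mapping.lookup r b0"
      using fP a0P by (simp add: sum.delta)
    finally show ?thesis .
  qed
  moreover have "Poly_Mapping.lookup p a0 \<noteq> 0" "Poly_Mapping.lookup r b0 \<noteq> 0"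
    using a0P b0R by (auto simp: P_def R_def in_keys_iff)
  ultimately have "a0 + b0 \<in> Poly_Mapping.keys (p * r)" by (simp add: in_keys_iff)
  then show ?thesis using a0P b0R wa unfolding P_def R_def w_def by blast
qed

lemma unit_novars:
  fixes q r :: cpoly
  assumes "q * r = 1"
  shows "vars q = {}"
proof -
  have nz: "q \<noteq> 0" "r \<noteq> 0" using assms by auto
  have "Poly_Mapping.lookup m v = 0" if "m \<in> Poly_Mapping.keys q" for m v
  proof -
    obtain a b where ab: "a \<in> Poly_Mapping.keys q" "b \<in> Poly_Mapping.keys r"
      "a + b \<in> Poly_Mapping.keys (q * r)"
      "\<forall>a'\<in>Poly_Mapping.keys q. Poly_Mapping.lookup a' v \<le> Poly_Mapping.lookup a v"
      using lead_key[OF nz, of v] by blast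
    have "a + b = 0" using ab(3) assms by simp
    then have "Poly_Mapping.lookup (a + b) v = 0" by simp
    then have "Poly_Mapping.lookup a v = 0" by (simp add: lookup_add)
    then show ?thesis using ab(4) that by fastforce
  qed
  then have "Poly_Mapping.keys m = {}" if "m \<in> Poly_Mapping.keys q" for m
    using that by (auto simp: in_keys_iff intro!: poly_mapping_eqI)
  then show ?thesis by (auto simp: vars_def)
qed

lemma factor_novar:
  fixes p r :: cpoly
  assumes "p \<noteq> 0" "r \<noteq> 0" "z \<notin> vars (p * r)"
  shows "z \<notin> vars p"
proof -
  obtain a b where ab: "a \<in> Poly_Mapping.keys p" "b \<in> Poly_Mapping.keys r"
    "a + b \<in> Poly_Mapping.keys (p * r)"
    "\<forall>a'\<in>Poly_Mapping.keys p. Poly_Mapping.lookup a' z \<le> Poly_Mapping.lookup a z"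
    using lead_key[OF assms(1,2), of z] by blast
  have "z \<notin> Poly_Mapping.keys (a + b)" using ab(3) assms(3) by (auto simp: vars_def)
  then have "Poly_Mapping.lookup (a + b) z = 0" by (simp add: in_keys_iff)
  then have "Poly_Mapping.lookup a z = 0" by (simp add: lookup_add)
  then have "Poly_Mapping.lookup m z = 0" if "m \<in> Poly_Mapping.keys p" for m
    using ab(4) that by fastforce
  then show ?thesis by (auto simp: vars_def in_keys_iff)
qed

lemma coeff_decomp:
  fixes p :: cpoly
  shows "p = (\<Sum>k\<in>(\<lambda>m. Poly_Mapping.lookup m z) ` Poly_Mapping.keys p.
           coeff_in z p k * Poly_Mapping.single (Poly_Mapping.single z k) 1)"
proof -
  have upd: "Poly_Mapping.update z 0 m + Poly_Mapping.single z (Poly_Mapping.lookup m z) = m" for m :: "mindex \<Rightarrow>\<^sub>0 nat"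
    by (rule poly_mapping_eqI) (simp add: lookup_add lookup_update lookup_single when_def)
  have c: "coeff_in z p k * Poly_Mapping.single (Poly_Mapping.single z k) 1
     = (\<Sum>m\<in>{m\<in>Poly_Mapping.keys p. Poly_Mapping.lookup m z = k}. Poly_Mapping.single m (Poly_Mapping.lookup p m))" for k
    unfolding coeff_in_def sum_distrib_right mult_single
    by (intro sum.cong refl) (use upd in auto)
  have "(\<Sum>k\<in>(\<lambda>m. Poly_Mapping.lookup m z) ` Poly_Mapping.keys p.
           coeff_in z p k * Poly_Mapping.single (Poly_Mapping.single z k) 1)
     = (\<Sum>k\<in>(\<lambda>m. Poly_Mapping.lookup m z) ` Poly_Mapping.keys p.
         \<Sum>m\<in>{m\<in>Poly_Mapping.keys p. Poly_Mapping.lookup m z = k}. Poly_Mapping.single m (Poly_Mapping.lookup p m))"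
    by (simp add: c)
  also have "\<dots> = (\<Sum>m\<in>Poly_Mapping.keys p. Poly_Mapping.single m (Poly_Mapping.lookup p m))"
    by (rule sum.group) auto
  also have "\<dots> = p" using pm_expand[of p] by simp
  finally show ?thesis by simp
qed

lemma meval_novar:
  assumes "z \<notin> vars p"
  shows "meval p (u(z := t)) = meval p u"
  unfolding meval_def
proof (intro sum.cong refl arg_cong2[where f="(*)"] prod.cong)
  fix m v assume "m \<in> Poly_Mapping.keys p" "v \<in> Poly_Mapping.keys m"
  then have "v \<noteq> z" using assms by (auto simp: vars_def)
  then show "(u(z := t)) v ^ Poly_Mapping.lookup m v = u v ^ Poly_Mapping.lookup m v" by simp
qed

lemma finite_mons: "finite (mons n d)"
proof -
  let ?f = "\<lambda>\<nu>::mindex. restrict (Poly_Mapping.lookup \<nu>) {..n}"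
  have "?f ` mons n d \<subseteq> PiE {..n} (\<lambda>_. {..d})"
  proof
    fix g assume "g \<in> ?f ` mons n d"
    then obtain \<nu> where \<nu>: "\<nu> \<in> mons n d" "g = ?f \<nu>" by blast
    have "Poly_Mapping.lookup \<nu> j \<le> d" if "j \<le> n" for j
    proof -
      have "Poly_Mapping.lookup \<nu> j \<le> (\<Sum>i\<le>n. Poly_Mapping.lookup \<nu> i)"
        using that by (intro member_le_sum) auto
      then show ?thesis using \<nu>(1) by (simp add: mons_def)
    qed
    then show "g \<in> PiE {..n} (\<lambda>_. {..d})" using \<nu>(2) by (auto simp: PiE_iff)
  qed
  then have "finite (?f ` mons n d)" by (rule finite_subset) (simp add: finite_PiE)
  moreover have "inj_on ?f (mons n d)"
  proof
    fix a b assume ab: "a \<in> mons n d" "b \<in> mons n d" "?f a = ?f b"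
    show "a = b"
    proof (rule poly_mapping_eqI)
      fix k
      show "Poly_Mapping.lookup a k = Poly_Mapping.lookup b k"
      proof (cases "k \<le> n")
        case True
        then show ?thesis using fun_cong[OF ab(3), of k] by simp
      next
        case False
        then have "k \<notin> Poly_Mapping.keys a" "k \<notin> Poly_Mapping.keys b" using ab(1,2) by (auto simp: mons_def)
        then show ?thesis by (simp add: in_keys_iff)
      qed
    qed
  qed
  ultimately show ?thesis using finite_imageD by blast
qed

lemma single_in_mons: "i \<le> n \<Longrightarrow> Poly_Mapping.single i d \<in> mons n d"
  by (auto simp: mons_def lookup_single when_def)

lemma fp_eval:
  assumes "i \<le> n" "d \<ge> 1" "\<forall>\<nu>. u \<nu> \<noteq> 0 \<longrightarrow> (\<exists>j\<le>n. \<nu> = Poly_Mapping.single j d)"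
  shows "form_partial n d u i x = u (Poly_Mapping.single i d) * of_nat d * x i ^ (d - 1)"
proof -
  let ?g = "\<lambda>\<nu>. u \<nu> * of_nat (Poly_Mapping.lookup \<nu> i) * x i ^ (Poly_Mapping.lookup \<nu> i - 1)
        * (\<Prod>j\<in>{..n} - {i}. x j ^ Poly_Mapping.lookup \<nu> j)"
  have z: "?g \<nu> = 0" if "\<nu> \<noteq> Poly_Mapping.single i d" for \<nu>
  proof (cases "u \<nu> = 0")
    case False
    then obtain j where "j \<le> n" "\<nu> = Poly_Mapping.single j d" using assms(3) by blast
    with that have "j \<noteq> i" by auto
    then have "Poly_Mapping.lookup \<nu> i = 0" using \<open>\<nu> = _\<close> by (simp add: lookup_single when_def)
    then show ?thesis by simp
  qed simp
  have "form_partial n d u i x = sum ?g (mons n d)" by (simp add: form_partial_def)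
  also have "\<dots> = ?g (Poly_Mapping.single i d)"
  proof -
    have "sum ?g (mons n d) = sum ?g {Poly_Mapping.single i d}"
    proof (rule sum.mono_neutral_right[OF finite_mons])
      show "{Poly_Mapping.single i d} \<subseteq> mons n d" using single_in_mons[OF assms(1)] by simp
      show "\<forall>\<nu>\<in>mons n d - {Poly_Mapping.single i d}. ?g \<nu> = 0" using z by blast
    qed
    then show ?thesis by simp
  qed
  also have "\<dots> = u (Poly_Mapping.single i d) * of_nat d * x i ^ (d - 1)"
    by (simp add: lookup_single when_def)
  finally show ?thesis .
qed

lemma single_inj_d: "d \<noteq> 0 \<Longrightarrow> Poly_Mapping.single a d = (Poly_Mapping.single b d :: mindex) \<longleftrightarrow> a = b"
  by (metis lookup_single_eq lookup_single_not_eq)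

theorem mainTheorem7:
  fixes n d :: nat and p :: cpoly
  assumes "n \<ge> 1" and "d \<ge> 2"
    and "vars p \<subseteq> mons n d"
    and "homogeneous p"
    and "irreducible p"
    and "\<forall>u. meval p u = 0 \<longleftrightarrow> singular_form n d u"
  shows "\<forall>q::cpoly. Poly_Mapping.single 0 d \<notin> vars q
            \<and> (\<forall>k. q dvd coeff_in (Poly_Mapping.single 0 d) p k) \<longrightarrow> vars q = {}"
proof (intro allI impI)
  fix q :: cpoly
  define z :: mindex where "z = Poly_Mapping.single 0 d"
  assume "Poly_Mapping.single 0 d \<notin> vars q \<and> (\<forall>k. q dvd coeff_in (Poly_Mapping.single 0 d) p k)"
  then have qz: "z \<notin> vars q" and qd: "\<And>k. q dvd coeff_in z p k" unfolding z_def by auto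
  have d0: "d \<noteq> 0" "d \<ge> 1" using assms(2) by auto
  have pnz: "p \<noteq> 0" using assms(5) by auto
  have "q dvd p"
    by (subst coeff_decomp[of p z]) (intro dvd_sum dvd_mult2 qd)
  then obtain s where ps: "p = q * s" by (elim dvdE)
  have snz: "s \<noteq> 0" and qnz: "q \<noteq> 0" using pnz ps by auto
  define u0 :: "mindex \<Rightarrow> complex" where
    "u0 = (\<lambda>\<nu>. if \<exists>j. 1 \<le> j \<and> j \<le> n \<and> \<nu> = Poly_Mapping.single j d then 1 else 0)"
  define u1 where "u1 = u0(z := 1)"
  have u0z: "u0 z = 0" using d0 by (auto simp: u0_def z_def single_inj_d)
  have u0s: "\<forall>\<nu>. u0 \<nu> \<noteq> 0 \<longrightarrow> (\<exists>j\<le>n. \<nu> = Poly_Mapping.single j d)"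
    by (auto simp: u0_def)
  have u1s: "\<forall>\<nu>. u1 \<nu> \<noteq> 0 \<longrightarrow> (\<exists>j\<le>n. \<nu> = Poly_Mapping.single j d)"
    using u0s by (auto simp: u1_def z_def)
  have sing0: "singular_form n d u0"
    unfolding singular_form_def
  proof (rule exI[of _ "\<lambda>i::nat. if i = 0 then (1::complex) else 0"], intro conjI allI impI)
    let ?x = "\<lambda>i::nat. if i = 0 then (1::complex) else 0"
    show "\<exists>i\<le>n. ?x i \<noteq> 0" by (intro exI[of _ 0]) simp
    fix i assume "i \<le> n"
    show "form_partial n d u0 i ?x = 0"
    proof (cases "i = 0")
      case True
      then show ?thesis using fp_eval[OF \<open>i \<le> n\<close> d0(2) u0s] u0z by (simp add: z_def)
    next
      case False
      then show ?thesis using fp_eval[OF \<open>i \<le> n\<close> d0(2) u0s] assms(2) by simp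
    qed
  qed
  have nsing1: "\<not> singular_form n d u1"
  proof
    assume "singular_form n d u1"
    then obtain x :: "nat \<Rightarrow> complex" where x: "\<exists>i\<le>n. x i \<noteq> 0" "\<forall>i\<le>n. form_partial n d u1 i x = 0"
      unfolding singular_form_def by blast
    then obtain i where i: "i \<le> n" "x i \<noteq> 0" by blast
    have "u1 (Poly_Mapping.single i d) = 1"
      using i(1) by (cases "i = 0") (auto simp: u1_def u0_def z_def)
    then have "of_nat d * x i ^ (d - 1) = 0" using x(2) i(1) fp_eval[OF i(1) d0(2) u1s, of x] by simp
    then show False using i(2) d0 by simp
  qed
  have pz: "z \<in> vars p"
  proof (rule ccontr)
    assume "z \<notin> vars p"
    then have "meval p u1 = meval p u0" unfolding u1_def by (rule meval_novar)
    then show False using assms(6) sing0 nsing1 by metis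
  qed
  from assms(5) ps have "q dvd 1 \<or> s dvd 1" unfolding irreducible_def by blast
  then show "vars q = {}"
  proof
    assume "q dvd 1"
    then obtain r where "1 = q * r" by (elim dvdE)
    then show ?thesis using unit_novars by metis
  next
    assume "s dvd 1"
    then obtain r where r: "1 = s * r" by (elim dvdE)
    then have rnz: "r \<noteq> 0" by auto
    have "p * r = q" using ps r by (simp add: mult.assoc)
    then have "z \<notin> vars p" using factor_novar[OF pnz rnz] qz by simp
    then show ?thesis using pz by simp
  qed
qed

end
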